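(* Let $X$ be a quasi-geodesic metric space and let $G\curvearrowright X$ be a cobounded quasi-action with coarse stabiliser $H$. Then: (1) $G$ is finitely generated relative to $H$; (2) $H$ is a commensurated subgroup of $G$; (3) the quasi-action $G\curvearrowright X$ is quasi-conjugate to the natural left action of $G$ on $G/H$ (equipped with the relative word metric with respect to a finite relative generating set); in particular $G/H$ is quasi-isometric to $X$.
   Context: Quasi-action, cobounded, quasi-geodesic: a $(K,A)$-quasi-action assigns to each $g\in G$ a $(K,A)$-quasi-isometry $x\mapsto g\cdot x$ with $d(h\cdot(g\cdot x),hg\cdot x)\le A$ and $d(e\cdot x,x)\le A$; cobounded means some $r$ has: for all $x,y$ there is $g$ with $d(g\cdot x,y)\le r$. $T\subseteq G$ is bounded if $\{t\cdot x_0:t\in T\}$ is bounded. A coarse stabiliser is a bounded subgroup $H$ such that every bounded subset of $G$ lies in finitely many left $H$-cosets. $G$ is finitely generated relative to $H$ if there is a finite $S\subseteq G$ with $S\cup H$ generating $G$. For such $S$, the relative word metric on $G/H$ is the path metric of the graph with vertices the left cosets $gH$ and edges $(gH,gsH)$ for $g\in G$, $s\in S$. $H$ is commensurated if $gHg^{-1}\cap H$ has finite index in both $H$ and $gHg^{-1}$ for all $g$. Quasi-actions $G\curvearrowright X$, $G\curvearrowright Y$ are quasi-conjugate if there is a quasi-isometry $f:X\to Y$ with $\sup_{g,x}d(g\cdot f(x),f(g\cdot x))<\infty$. *)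

theory Defs
  imports "HOL-Analysis.Analysis" "HOL-Algebra.Algebra"
begin

definition quasi_isometry_on ::
  "real \<Rightarrow> real \<Rightarrow> ('a \<Rightarrow> 'a \<Rightarrow> real) \<Rightarrow> 'a set \<Rightarrow>
   ('b \<Rightarrow> 'b \<Rightarrow> real) \<Rightarrow> 'b set \<Rightarrow> ('a \<Rightarrow> 'b) \<Rightarrow> bool" where
  "quasi_isometry_on K A dX S dY T f \<longleftrightarrow>
     f ` S \<subseteq> T \<and>
     (\<forall>x\<in>S. \<forall>y\<in>S. dX x y / K - A \<le> dY (f x) (f y) \<and> dY (f x) (f y) \<le> K * dX x y + A) \<and>
     (\<forall>z\<in>T. \<exists>x\<in>S. dY (f x) z \<le> A)"

definition quasi_isometric_map ::
  "('a \<Rightarrow> 'a \<Rightarrow> real) \<Rightarrow> 'a set \<Rightarrow> ('b \<Rightarrow> 'b \<Rightarrow> real) \<Rightarrow> 'b set \<Rightarrow> ('a \<Rightarrow> 'b) \<Rightarrow> bool" where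
  "quasi_isometric_map dX S dY T f \<longleftrightarrow> (\<exists>K A. K \<ge> 1 \<and> A \<ge> 0 \<and> quasi_isometry_on K A dX S dY T f)"

definition quasi_geodesic_space :: "'x::metric_space itself \<Rightarrow> bool" where
  "quasi_geodesic_space _ \<longleftrightarrow> (\<exists>K C. K \<ge> 1 \<and> C \<ge> 0 \<and>
     (\<forall>x y::'x. \<exists>(\<gamma>::real \<Rightarrow> 'x) L. L \<ge> 0 \<and> \<gamma> 0 = x \<and> \<gamma> L = y \<and>
        (\<forall>s\<in>{0..L}. \<forall>t\<in>{0..L}. \<bar>s - t\<bar> / K - C \<le> dist (\<gamma> s) (\<gamma> t) \<and>
                                     dist (\<gamma> s) (\<gamma> t) \<le> K * \<bar>s - t\<bar> + C)))"

definition quasi_action ::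
  "('g, 'm) monoid_scheme \<Rightarrow> real \<Rightarrow> real \<Rightarrow> ('g \<Rightarrow> 'x::metric_space \<Rightarrow> 'x) \<Rightarrow> bool" where
  "quasi_action G K A act \<longleftrightarrow>
     (\<forall>g\<in>carrier G. quasi_isometry_on K A dist UNIV dist UNIV (act g)) \<and>
     (\<forall>g\<in>carrier G. \<forall>h\<in>carrier G. \<forall>x. dist (act h (act g x)) (act (h \<otimes>\<^bsub>G\<^esub> g) x) \<le> A) \<and>
     (\<forall>x. dist (act \<one>\<^bsub>G\<^esub> x) x \<le> A)"

definition is_quasi_action :: "('g, 'm) monoid_scheme \<Rightarrow> ('g \<Rightarrow> 'x::metric_space \<Rightarrow> 'x) \<Rightarrow> bool" where
  "is_quasi_action G act \<longleftrightarrow> (\<exists>K A. quasi_action G K A act)"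

definition cobounded_qa :: "('g, 'm) monoid_scheme \<Rightarrow> ('g \<Rightarrow> 'x::metric_space \<Rightarrow> 'x) \<Rightarrow> bool" where
  "cobounded_qa G act \<longleftrightarrow> (\<exists>r. \<forall>x y. \<exists>g\<in>carrier G. dist (act g x) y \<le> r)"

definition qa_bounded :: "('g \<Rightarrow> 'x::metric_space \<Rightarrow> 'x) \<Rightarrow> 'x \<Rightarrow> 'g set \<Rightarrow> bool" where
  "qa_bounded act x0 T \<longleftrightarrow> bounded ((\<lambda>t. act t x0) ` T)"

definition coarse_stabiliser ::
  "('g, 'm) monoid_scheme \<Rightarrow> ('g \<Rightarrow> 'x::metric_space \<Rightarrow> 'x) \<Rightarrow> 'x \<Rightarrow> 'g set \<Rightarrow> bool" where
  "coarse_stabiliser G act x0 H \<longleftrightarrow>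
     subgroup H G \<and> qa_bounded act x0 H \<and>
     (\<forall>T. T \<subseteq> carrier G \<longrightarrow> qa_bounded act x0 T \<longrightarrow>
        (\<exists>F. finite F \<and> F \<subseteq> carrier G \<and> T \<subseteq> (\<Union>g\<in>F. l_coset G g H)))"

definition rel_fin_gen :: "('g, 'm) monoid_scheme \<Rightarrow> 'g set \<Rightarrow> 'g set \<Rightarrow> bool" where
  "rel_fin_gen G H S \<longleftrightarrow> finite S \<and> S \<subseteq> carrier G \<and> generate G (S \<union> H) = carrier G"

definition fin_gen_relative :: "('g, 'm) monoid_scheme \<Rightarrow> 'g set \<Rightarrow> bool" where
  "fin_gen_relative G H \<longleftrightarrow> (\<exists>S. rel_fin_gen G H S)"

text \<open>K has finite index in L (number of left cosets of K meeting L is finite; K \<subseteq> L).\<close>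
definition finite_index_in :: "('g, 'm) monoid_scheme \<Rightarrow> 'g set \<Rightarrow> 'g set \<Rightarrow> bool" where
  "finite_index_in G K L \<longleftrightarrow> finite {l_coset G g K | g. g \<in> L}"

definition commensurated :: "('g, 'm) monoid_scheme \<Rightarrow> 'g set \<Rightarrow> bool" where
  "commensurated G H \<longleftrightarrow> subgroup H G \<and>
     (\<forall>g\<in>carrier G. let C = (\<lambda>h. g \<otimes>\<^bsub>G\<^esub> h \<otimes>\<^bsub>G\<^esub> inv\<^bsub>G\<^esub> g) ` H in
        finite_index_in G (C \<inter> H) H \<and> finite_index_in G (C \<inter> H) C)"

definition left_cosets :: "('g, 'm) monoid_scheme \<Rightarrow> 'g set \<Rightarrow> 'g set set" where
  "left_cosets G H = {l_coset G g H | g. g \<in> carrier G}"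

definition rel_edges :: "('g, 'm) monoid_scheme \<Rightarrow> 'g set \<Rightarrow> 'g set \<Rightarrow> ('g set \<times> 'g set) set" where
  "rel_edges G H S = {(a, b). \<exists>g\<in>carrier G. \<exists>s\<in>S.
      (a = l_coset G g H \<and> b = l_coset G (g \<otimes>\<^bsub>G\<^esub> s) H) \<or>
      (b = l_coset G g H \<and> a = l_coset G (g \<otimes>\<^bsub>G\<^esub> s) H)}"

definition rel_word_dist :: "('g, 'm) monoid_scheme \<Rightarrow> 'g set \<Rightarrow> 'g set \<Rightarrow> 'g set \<Rightarrow> 'g set \<Rightarrow> real" where
  "rel_word_dist G H S a b = real (LEAST n. (a, b) \<in> rel_edges G H S ^^ n)"

end

theory Submission
  imports Defs
begin

locale qa_ctx = group G for G :: "('g, 'm) monoid_scheme" (structure) +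
  fixes act :: "'g \<Rightarrow> 'x::metric_space \<Rightarrow> 'x" and K A BH r :: real and x0 :: 'x and H :: "'g set"
  assumes K1: "K \<ge> 1" and A0: "A \<ge> 0"
  and up: "g \<in> carrier G \<Longrightarrow> dist (act g x) (act g y) \<le> K * dist x y + A"
  and comp: "g \<in> carrier G \<Longrightarrow> h \<in> carrier G \<Longrightarrow> dist (act h (act g x)) (act (h \<otimes> g) x) \<le> A"
  and ident: "dist (act \<one> x) x \<le> A"
  and cob: "\<exists>g\<in>carrier G. dist (act g x) y \<le> r"
  and Hsub: "subgroup H G"
  and Hbd: "h \<in> H \<Longrightarrow> dist (act h x0) x0 \<le> BH"
  and cover: "T \<subseteq> carrier G \<Longrightarrow> bounded ((\<lambda>t. act t x0) ` T) \<Longrightarrow>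
      \<exists>F. finite F \<and> F \<subseteq> carrier G \<and> T \<subseteq> (\<Union>g\<in>F. g <# H)"
begin

lemma r0: "r \<ge> 0"
  using cob[of x0 x0] by (meson zero_le_dist order.trans)

lemma BH0: "BH \<ge> 0"
  using Hbd[OF subgroup.one_closed[OF Hsub]] by (meson zero_le_dist order.trans)

lemma L1:
  assumes "a \<in> carrier G" "b \<in> carrier G"
  shows "dist (act (a \<otimes> b) y) (act a z) \<le> K * dist (act b y) z + 2 * A"
proof -
  have "dist (act (a \<otimes> b) y) (act a (act b y)) \<le> A"
    using comp[OF assms(2,1), of y] by (simp add: dist_commute)
  moreover have "dist (act a (act b y)) (act a z) \<le> K * dist (act b y) z + A"
    using up[OF assms(1)] .
  ultimately show ?thesis using dist_triangle[of "act (a \<otimes> b) y" "act a z" "act a (act b y)"]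
    by linarith
qed

lemma L2:
  assumes "a \<in> carrier G" "b \<in> carrier G"
  shows "dist (act (inv a \<otimes> b) x0) x0 \<le> K * dist (act a x0) (act b x0) + 4 * A"
proof -
  have ia: "inv a \<in> carrier G" using assms by simp
  have 1: "dist (act (inv a \<otimes> b) x0) (act (inv a) (act a x0)) \<le> K * dist (act a x0) (act b x0) + 2 * A"
    using L1[OF ia assms(2), of x0 "act a x0"] by (simp add: dist_commute)
  have 2: "dist (act (inv a) (act a x0)) (act \<one> x0) \<le> A"
    using comp[OF assms(1) ia, of x0] assms by simp
  have 3: "dist (act \<one> x0) x0 \<le> A" by (rule ident)
  show ?thesis using 1 2 3 dist_triangle[of "act (inv a \<otimes> b) x0" x0 "act (inv a) (act a x0)"]
    dist_triangle[of "act (inv a) (act a x0)" x0 "act \<one> x0"] by linarith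
qed

definition rep :: "'x \<Rightarrow> 'g" where
  "rep x = (SOME g. g \<in> carrier G \<and> dist (act g x0) x \<le> r)"

lemma rep: "rep x \<in> carrier G" "dist (act (rep x) x0) x \<le> r"
proof -
  have "\<exists>g. g \<in> carrier G \<and> dist (act g x0) x \<le> r" using cob[of x0 x] by blast
  then show "rep x \<in> carrier G" "dist (act (rep x) x0) x \<le> r"
    unfolding rep_def by (metis (mono_tags, lifting) someI_ex)+
qed

lemma cover_R:
  "\<exists>F. finite F \<and> F \<subseteq> carrier G \<and> {t\<in>carrier G. dist (act t x0) y \<le> R} \<subseteq> (\<Union>f\<in>F. f <# H)"
proof -
  have "(\<lambda>t. act t x0) ` {t\<in>carrier G. dist (act t x0) y \<le> R} \<subseteq> cball y R"
    unfolding cball_def by (force simp: dist_commute[of y])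
  then have "bounded ((\<lambda>t. act t x0) ` {t\<in>carrier G. dist (act t x0) y \<le> R})"
    by (rule bounded_subset[OF bounded_cball])
  moreover have "{t\<in>carrier G. dist (act t x0) y \<le> R} \<subseteq> carrier G" by blast
  ultimately show ?thesis using cover by blast
qed

lemma coset_close:
  assumes "g \<in> carrier G" "a \<in> g <# H"
  shows "dist (act a x0) (act g x0) \<le> K * BH + 2 * A"
proof -
  have "\<exists>h\<in>H. a = g \<otimes> h" using assms(2) unfolding l_coset_def by simp
  then obtain h where h: "h \<in> H" "a = g \<otimes> h" by blast
  have hc: "h \<in> carrier G" using subgroup.mem_carrier[OF Hsub h(1)] .
  have "dist (act a x0) (act g x0) \<le> K * dist (act h x0) x0 + 2 * A"
    using L1[OF assms(1) hc, of x0 x0] unfolding h(2) .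
  also have "\<dots> \<le> K * BH + 2 * A" using mult_left_mono[OF Hbd[OF h(1)], of K] K1 by linarith
  finally show ?thesis .
qed

end

lemma chain_lemma:
  assumes "quasi_geodesic_space TYPE('x::metric_space)"
  shows "\<exists>D c1 c2. D \<ge> 0 \<and> c1 \<ge> 0 \<and> c2 \<ge> 0 \<and> (\<forall>x y::'x. \<exists>p N. p 0 = x \<and> p N = y \<and>
           real N \<le> c1 * dist x y + c2 \<and> (\<forall>i<N. dist (p i) (p (Suc i)) \<le> D))"
proof -
  obtain Kq Cq where KC: "Kq \<ge> 1" "Cq \<ge> 0" and
    qg: "\<forall>x y::'x. \<exists>(\<gamma>::real \<Rightarrow> 'x) L. L \<ge> 0 \<and> \<gamma> 0 = x \<and> \<gamma> L = y \<and>
        (\<forall>s\<in>{0..L}. \<forall>t\<in>{0..L}. \<bar>s - t\<bar> / Kq - Cq \<le> dist (\<gamma> s) (\<gamma> t) \<and>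
                                     dist (\<gamma> s) (\<gamma> t) \<le> Kq * \<bar>s - t\<bar> + Cq)"
    using assms unfolding quasi_geodesic_space_def by blast
  have "\<exists>p N. p 0 = x \<and> p N = y \<and> real N \<le> Kq * dist x y + (Kq * Cq + 1) \<and>
           (\<forall>i<N. dist (p i) (p (Suc i)) \<le> Kq + Cq)" for x y :: 'x
  proof -
    obtain \<gamma> L where L0: "L \<ge> 0" and g0: "\<gamma> 0 = x" and gL: "\<gamma> L = y" and
      qi: "\<forall>s\<in>{0..L}. \<forall>t\<in>{0..L}. \<bar>s - t\<bar> / Kq - Cq \<le> dist (\<gamma> s) (\<gamma> t) \<and>
                                     dist (\<gamma> s) (\<gamma> t) \<le> Kq * \<bar>s - t\<bar> + Cq"
      using qg by blast
    define N where "N = nat \<lceil>L\<rceil>"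
    define p where "p i = \<gamma> (min (real i) L)" for i
    have cc: "real_of_int \<lceil>L\<rceil> - 1 < L \<and> L \<le> real_of_int \<lceil>L\<rceil>" by (rule ceiling_correct)
    have "real N = real_of_int \<lceil>L\<rceil>" unfolding N_def using L0 by simp
    then have NL: "real N \<ge> L" "real N \<le> L + 1" using cc by linarith+
    have "p 0 = x" unfolding p_def using L0 g0 by simp
    moreover have "p N = y" unfolding p_def using NL gL by simp
    moreover have "real N \<le> Kq * dist x y + (Kq * Cq + 1)"
    proof -
      have q0: "0 \<in> {0..L}" "L \<in> {0..L}" using L0 by auto
      have "\<bar>0 - L\<bar> / Kq - Cq \<le> dist (\<gamma> 0) (\<gamma> L)" using qi q0 by blast
      then have "L / Kq \<le> dist x y + Cq" using L0 g0 gL by simp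
      then have "L \<le> Kq * (dist x y + Cq)" using KC by (simp add: field_simps)
      then show ?thesis using NL by (simp add: algebra_simps)
    qed
    moreover have "\<forall>i<N. dist (p i) (p (Suc i)) \<le> Kq + Cq"
    proof (intro allI impI)
      fix i assume "i < N"
      have a: "min (real i) L \<in> {0..L}" "min (real (Suc i)) L \<in> {0..L}" using L0 by auto
      have b: "\<bar>min (real i) L - min (real (Suc i)) L\<bar> \<le> 1" by auto
      have "dist (p i) (p (Suc i)) \<le> Kq * \<bar>min (real i) L - min (real (Suc i)) L\<bar> + Cq"
        unfolding p_def using qi a by blast
      also have "\<dots> \<le> Kq * 1 + Cq" using b KC by (intro add_right_mono mult_left_mono) auto
      finally show "dist (p i) (p (Suc i)) \<le> Kq + Cq" by simp
    qed
    ultimately show ?thesis by blast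
  qed
  then show ?thesis using KC
    by (intro exI[of _ "Kq + Cq"] exI[of _ Kq] exI[of _ "Kq * Cq + 1"]) auto
qed

locale qa_S = qa_ctx +
  fixes S
  assumes Sfin: "finite S" and Ssub: "S \<subseteq> carrier G" and Sgen: "generate G (S \<union> H) = carrier G"
begin

abbreviation E where "E \<equiv> rel_edges G H S"

lemma Hc: "H \<subseteq> carrier G" using subgroup.subset[OF Hsub] .

lemma edge: "g \<in> carrier G \<Longrightarrow> s \<in> S \<Longrightarrow> (g <# H, (g \<otimes> s) <# H) \<in> E"
  unfolding rel_edges_def by blast

lemma edge': "g \<in> carrier G \<Longrightarrow> s \<in> S \<Longrightarrow> ((g \<otimes> s) <# H, g <# H) \<in> E"
  unfolding rel_edges_def by blast

lemma coset_mult_H: "a \<in> carrier G \<Longrightarrow> h \<in> H \<Longrightarrow> (a \<otimes> h) <# H = a <# H"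
proof -
  assume a: "a \<in> carrier G" and h: "h \<in> H"
  have "a \<otimes> h \<in> a <# H" unfolding l_coset_def using h by blast
  then show ?thesis using l_repr_independence[OF _ a Hsub] by simp
qed

lemma conn_gen: "g \<in> generate G (S \<union> H) \<Longrightarrow>
   g \<in> carrier G \<and> (\<exists>n. \<forall>a\<in>carrier G. (a <# H, (a \<otimes> g) <# H) \<in> E ^^ n)"
proof (induction rule: generate.induct)
  case one
  show ?case by (intro conjI exI[of _ 0]) auto
next
  case (incl h)
  show ?case
  proof (cases "h \<in> S")
    case True
    then have hc: "h \<in> carrier G" using Ssub by blast
    show ?thesis using True hc edge by (intro conjI exI[of _ 1]) auto
  next
    case False
    then have hH: "h \<in> H" using incl by blast
    have hc: "h \<in> carrier G" using Hc hH by blast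
    show ?thesis using hc coset_mult_H[OF _ hH] by (intro conjI exI[of _ 0]) auto
  qed
next
  case (inv h)
  show ?case
  proof (cases "h \<in> S")
    case True
    then have hc: "h \<in> carrier G" using Ssub by blast
    have "\<forall>a\<in>carrier G. (a <# H, (a \<otimes> inv h) <# H) \<in> E"
    proof
      fix a assume a: "a \<in> carrier G"
      have "((a \<otimes> inv h) <# H, ((a \<otimes> inv h) \<otimes> h) <# H) \<in> E" using edge[OF _ True] a hc by simp
      moreover have "(a \<otimes> inv h) \<otimes> h = a" using a hc by (simp add: m_assoc)
      ultimately show "(a <# H, (a \<otimes> inv h) <# H) \<in> E" using edge'[OF _ True, of "a \<otimes> inv h"] a hc
        by simp
    qed
    then show ?thesis using hc by (intro conjI exI[of _ 1]) auto
  next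
    case False
    then have hH: "h \<in> H" using inv by blast
    have hc: "h \<in> carrier G" using Hc hH by blast
    have ihH: "inv h \<in> H" using subgroup.m_inv_closed[OF Hsub hH] .
    show ?thesis using hc coset_mult_H[OF _ ihH] by (intro conjI exI[of _ 0]) auto
  qed
next
  case (eng h1 h2)
  obtain n1 where n1: "\<forall>a\<in>carrier G. (a <# H, (a \<otimes> h1) <# H) \<in> E ^^ n1" using eng by blast
  obtain n2 where n2: "\<forall>a\<in>carrier G. (a <# H, (a \<otimes> h2) <# H) \<in> E ^^ n2" using eng by blast
  have c: "h1 \<in> carrier G" "h2 \<in> carrier G" using eng by auto
  have "\<forall>a\<in>carrier G. (a <# H, (a \<otimes> (h1 \<otimes> h2)) <# H) \<in> E ^^ (n1 + n2)"
  proof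
    fix a assume a: "a \<in> carrier G"
    have "(a <# H, (a \<otimes> h1) <# H) \<in> E ^^ n1" using n1 a by blast
    moreover have "((a \<otimes> h1) <# H, ((a \<otimes> h1) \<otimes> h2) <# H) \<in> E ^^ n2" using n2 a c by simp
    ultimately have "(a <# H, ((a \<otimes> h1) \<otimes> h2) <# H) \<in> E ^^ n1 O E ^^ n2" by blast
    then show "(a <# H, (a \<otimes> (h1 \<otimes> h2)) <# H) \<in> E ^^ (n1 + n2)"
      using a c by (simp add: relpow_add m_assoc)
  qed
  then show ?case using c by blast
qed

lemma conn: "g \<in> carrier G \<Longrightarrow> \<exists>n. \<forall>a\<in>carrier G. (a <# H, (a \<otimes> g) <# H) \<in> E ^^ n"
  using conn_gen Sgen by blast

lemma conn_fin: "finite F \<Longrightarrow> F \<subseteq> carrier G \<Longrightarrow>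
   \<exists>N. \<forall>f\<in>F. \<forall>a\<in>carrier G. \<exists>n\<le>N. (a <# H, (a \<otimes> f) <# H) \<in> E ^^ n"
proof (induction F rule: finite_induct)
  case empty
  then show ?case by blast
next
  case (insert f F)
  obtain N where N: "\<forall>f\<in>F. \<forall>a\<in>carrier G. \<exists>n\<le>N. (a <# H, (a \<otimes> f) <# H) \<in> E ^^ n"
    using insert by blast
  obtain n where n: "\<forall>a\<in>carrier G. (a <# H, (a \<otimes> f) <# H) \<in> E ^^ n"
    using conn insert by blast
  show ?case
  proof (rule exI[of _ "max N n"], intro ballI)
    fix g a assume g: "g \<in> insert f F" and a: "a \<in> carrier G"
    show "\<exists>m\<le>max N n. (a <# H, (a \<otimes> g) <# H) \<in> E ^^ m"
    proof (cases "g = f")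
      case True
      then show ?thesis using n a by (intro exI[of _ n]) auto
    next
      case False
      then have "g \<in> F" using g by blast
      then obtain m where "m \<le> N" "(a <# H, (a \<otimes> g) <# H) \<in> E ^^ m" using N a by blast
      then show ?thesis by (intro exI[of _ m]) auto
    qed
  qed
qed

lemma W1: "\<exists>N. \<forall>a\<in>carrier G. \<forall>b\<in>carrier G. dist (act a x0) (act b x0) \<le> R \<longrightarrow>
   (\<exists>n\<le>N. (a <# H, b <# H) \<in> E ^^ n)"
proof -
  obtain F where F: "finite F" "F \<subseteq> carrier G"
    "{t\<in>carrier G. dist (act t x0) x0 \<le> K * R + 4 * A} \<subseteq> (\<Union>f\<in>F. f <# H)"
    using cover_R[of x0 "K * R + 4 * A"] by blast
  obtain N where N: "\<forall>f\<in>F. \<forall>a\<in>carrier G. \<exists>n\<le>N. (a <# H, (a \<otimes> f) <# H) \<in> E ^^ n"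
    using conn_fin[OF F(1,2)] by blast
  have "\<exists>n\<le>N. (a <# H, b <# H) \<in> E ^^ n"
    if a: "a \<in> carrier G" and b: "b \<in> carrier G" and d: "dist (act a x0) (act b x0) \<le> R" for a b
  proof -
    define u where "u = inv a \<otimes> b"
    have uc: "u \<in> carrier G" unfolding u_def using a b by simp
    have "dist (act u x0) x0 \<le> K * dist (act a x0) (act b x0) + 4 * A"
      unfolding u_def by (rule L2[OF a b])
    also have "\<dots> \<le> K * R + 4 * A" using mult_left_mono[OF d, of K] K1 by linarith
    finally have "u \<in> (\<Union>f\<in>F. f <# H)" using F(3) uc by blast
    then obtain f where f: "f \<in> F" "u \<in> f <# H" by blast
    have "\<exists>h\<in>H. u = f \<otimes> h" using f(2) unfolding l_coset_def by simp
    then obtain h where h: "h \<in> H" "u = f \<otimes> h" by blast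
    have fc: "f \<in> carrier G" using f F(2) by blast
    have hc: "h \<in> carrier G" using h Hc by blast
    have "b = a \<otimes> u" unfolding u_def using a b by (simp add: m_assoc[symmetric])
    also have "\<dots> = (a \<otimes> f) \<otimes> h" using h a fc hc by (simp add: m_assoc)
    finally have "b <# H = (a \<otimes> f) <# H" using coset_mult_H[OF _ h(1), of "a \<otimes> f"] a fc by simp
    then show ?thesis using N f(1) a by simp
  qed
  then show ?thesis by blast
qed

end

context qa_S begin

lemma dw_le: "(P, Q) \<in> E ^^ n \<Longrightarrow> rel_word_dist G H S P Q \<le> real n"
  unfolding rel_word_dist_def by (simp add: Least_le)

lemma dw_path:
  assumes a: "a \<in> carrier G" and b: "b \<in> carrier G"
  shows "\<exists>n. rel_word_dist G H S (a <# H) (b <# H) = real n \<and> (a <# H, b <# H) \<in> E ^^ n"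
proof -
  have c: "inv a \<otimes> b \<in> carrier G" using a b by simp
  obtain n where "(a <# H, (a \<otimes> (inv a \<otimes> b)) <# H) \<in> E ^^ n" using conn[OF c] a by blast
  moreover have "a \<otimes> (inv a \<otimes> b) = b" using a b by (simp add: m_assoc[symmetric])
  ultimately have ex: "\<exists>n. (a <# H, b <# H) \<in> E ^^ n" by auto
  show ?thesis unfolding rel_word_dist_def using LeastI_ex[OF ex] by blast
qed

definition BS :: real where "BS = Max (insert 0 ((\<lambda>s. dist (act s x0) x0) ` S))"

lemma BS: "BS \<ge> 0" "s \<in> S \<Longrightarrow> dist (act s x0) x0 \<le> BS"
  unfolding BS_def using Sfin by (auto intro: Max_ge)

definition DE :: real where "DE = 2 * (K * BH + 2 * A) + K * BS + 2 * A"

lemma DE0: "DE \<ge> 0"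
  unfolding DE_def using K1 A0 BH0 BS(1) by (simp add: add_nonneg_nonneg)

lemma shift_close:
  assumes g: "g \<in> carrier G" and s: "s \<in> S" and x: "x \<in> g <# H" and y: "y \<in> (g \<otimes> s) <# H"
  shows "dist (act x x0) (act y x0) \<le> DE"
proof -
  have sc: "s \<in> carrier G" using s Ssub by blast
  have gs: "g \<otimes> s \<in> carrier G" using g sc by simp
  have 1: "dist (act x x0) (act g x0) \<le> K * BH + 2 * A" by (rule coset_close[OF g x])
  have 2: "dist (act y x0) (act (g \<otimes> s) x0) \<le> K * BH + 2 * A" by (rule coset_close[OF gs y])
  have "dist (act (g \<otimes> s) x0) (act g x0) \<le> K * dist (act s x0) x0 + 2 * A" by (rule L1[OF g sc])
  also have "\<dots> \<le> K * BS + 2 * A" using mult_left_mono[OF BS(2)[OF s], of K] K1 by linarith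
  finally have 3: "dist (act (g \<otimes> s) x0) (act g x0) \<le> K * BS + 2 * A" .
  have "dist (act x x0) (act y x0) \<le> dist (act x x0) (act g x0) + dist (act g x0) (act (g \<otimes> s) x0)
      + dist (act (g \<otimes> s) x0) (act y x0)"
    using dist_triangle[of "act x x0" "act y x0" "act g x0"]
      dist_triangle[of "act g x0" "act y x0" "act (g \<otimes> s) x0"] by linarith
  then show ?thesis using 1 2 3 unfolding DE_def by (simp add: dist_commute)
qed

lemma edge_close:
  assumes e: "(P, Q) \<in> E" and x: "x \<in> P" and y: "y \<in> Q"
  shows "dist (act x x0) (act y x0) \<le> DE"
proof -
  obtain g s where g: "g \<in> carrier G" "s \<in> S" and
    c: "(P = g <# H \<and> Q = (g \<otimes> s) <# H) \<or> (Q = g <# H \<and> P = (g \<otimes> s) <# H)"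
    using e unfolding rel_edges_def by blast
  from c show ?thesis
  proof
    assume "P = g <# H \<and> Q = (g \<otimes> s) <# H"
    then show ?thesis using shift_close[OF g, of x y] x y by simp
  next
    assume "Q = g <# H \<and> P = (g \<otimes> s) <# H"
    then show ?thesis using shift_close[OF g, of y x] x y by (simp add: dist_commute)
  qed
qed

lemma edge_src: "(P, Q) \<in> E \<Longrightarrow> \<exists>g\<in>carrier G. P = g <# H"
  unfolding rel_edges_def using Ssub by (auto; blast)

lemma same_close:
  assumes g: "g \<in> carrier G" and x: "x \<in> g <# H" and y: "y \<in> g <# H"
  shows "dist (act x x0) (act y x0) \<le> DE"
proof -
  have "dist (act x x0) (act y x0) \<le> dist (act x x0) (act g x0) + dist (act y x0) (act g x0)"
    by (rule dist_triangle2)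
  also have "\<dots> \<le> 2 * (K * BH + 2 * A)" using add_mono[OF coset_close[OF g x] coset_close[OF g y]] by (simp add: algebra_simps)
  also have "\<dots> \<le> DE" unfolding DE_def using K1 A0 BS(1) by simp
  finally show ?thesis .
qed

lemma path_close:
  "(P, Q) \<in> E ^^ n \<Longrightarrow> g \<in> carrier G \<Longrightarrow> P = g <# H \<Longrightarrow> x \<in> P \<Longrightarrow> y \<in> Q \<Longrightarrow>
   dist (act x x0) (act y x0) \<le> DE * (real n + 1)"
proof (induction n arbitrary: Q y)
  case 0
  then show ?case using same_close[of g x y] by simp
next
  case (Suc n)
  then obtain R where R1: "(P, R) \<in> E ^^ n" and R2: "(R, Q) \<in> E" by auto
  obtain g' where g': "g' \<in> carrier G" "R = g' <# H" using edge_src[OF R2] by blast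
  have "g' \<in> R" using g' lcos_self[OF _ Hsub] by simp
  then have 1: "dist (act x x0) (act g' x0) \<le> DE * (real n + 1)" using Suc.IH[OF R1] Suc.prems by blast
  have 2: "dist (act g' x0) (act y x0) \<le> DE" using edge_close[OF R2 \<open>g' \<in> R\<close> Suc.prems(5)] .
  have "dist (act x x0) (act y x0) \<le> dist (act x x0) (act g' x0) + dist (act g' x0) (act y x0)"
    by (rule dist_triangle)
  also have "\<dots> \<le> DE * (real n + 1) + DE" using 1 2 by linarith
  also have "\<dots> = DE * (real (Suc n) + 1)" by (simp add: algebra_simps)
  finally show ?case .
qed

end

context qa_ctx begin

lemma part1:
  assumes qg: "quasi_geodesic_space TYPE('x)"
  shows "fin_gen_relative G H"
proof -
  obtain D c1 c2 where D0: "D \<ge> 0" and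
    ch: "\<forall>x y::'x. \<exists>p N. p 0 = x \<and> p N = y \<and> real N \<le> c1 * dist x y + c2 \<and>
                (\<forall>i<N. dist (p i) (p (Suc i)) \<le> D)"
    using chain_lemma[OF qg] by blast
  define R0 where "R0 = r + K * (2 * r + D) + 4 * A"
  obtain F where F: "finite F" "F \<subseteq> carrier G"
    "{t\<in>carrier G. dist (act t x0) x0 \<le> R0} \<subseteq> (\<Union>f\<in>F. f <# H)"
    using cover_R[of x0 R0] by blast
  have Hc: "H \<subseteq> carrier G" using subgroup.subset[OF Hsub] .
  define Gen where "Gen = generate G (F \<union> H)"
  have Gsub: "Gen \<subseteq> carrier G" unfolding Gen_def using generate_incl F(2) Hc by blast
  have KR: "K * (2 * r + D) \<ge> 0" using K1 r0 D0 by simp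
  have inT: "t \<in> Gen" if t: "t \<in> carrier G" "dist (act t x0) x0 \<le> R0" for t
  proof -
    have "t \<in> (\<Union>f\<in>F. f <# H)" using F(3) t by blast
    then obtain f where f: "f \<in> F" "t \<in> f <# H" by blast
    have "\<exists>h\<in>H. t = f \<otimes> h" using f(2) unfolding l_coset_def by simp
    then obtain h where h: "h \<in> H" "t = f \<otimes> h" by blast
    have "f \<in> Gen" "h \<in> Gen" unfolding Gen_def using f(1) h(1) by (auto intro: generate.incl)
    then show ?thesis unfolding h(2) Gen_def by (rule generate.eng)
  qed
  have "g \<in> Gen" if g: "g \<in> carrier G" for g
  proof -
    obtain p N where p: "p 0 = x0" "p N = act g x0" "\<forall>i<N. dist (p i) (p (Suc i)) \<le> D"
      using ch by blast
    have "i \<le> N \<Longrightarrow> rep (p i) \<in> Gen" for i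
    proof (induction i)
      case 0
      have "dist (act (rep (p 0)) x0) x0 \<le> r" using rep(2)[of "p 0"] p(1) by simp
      then show ?case using inT[OF rep(1)] unfolding R0_def using KR A0 by simp
    next
      case (Suc i)
      define a where "a = rep (p i)"
      define b where "b = rep (p (Suc i))"
      have ac: "a \<in> carrier G" and bc: "b \<in> carrier G" unfolding a_def b_def using rep(1) by auto
      have aG: "a \<in> Gen" unfolding a_def using Suc by simp
      have "dist (act a x0) (act b x0) \<le> dist (act a x0) (p i) + dist (p i) (p (Suc i)) + dist (p (Suc i)) (act b x0)"
        using dist_triangle[of "act a x0" "act b x0" "p i"] dist_triangle[of "p i" "act b x0" "p (Suc i)"]
        by linarith
      also have "\<dots> \<le> 2 * r + D"
      proof -
        have "dist (p i) (p (Suc i)) \<le> D" using p(3) Suc.prems by simp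
        then show ?thesis using rep(2)[of "p i"] rep(2)[of "p (Suc i)"] unfolding a_def b_def
          by (simp add: dist_commute)
      qed
      finally have d: "dist (act a x0) (act b x0) \<le> 2 * r + D" .
      have "dist (act (inv a \<otimes> b) x0) x0 \<le> K * dist (act a x0) (act b x0) + 4 * A" by (rule L2[OF ac bc])
      also have "\<dots> \<le> K * (2 * r + D) + 4 * A" using mult_left_mono[OF d, of K] K1 by simp
      also have "\<dots> \<le> R0" unfolding R0_def using r0 by simp
      finally have "inv a \<otimes> b \<in> Gen" using inT ac bc by simp
      then have "a \<otimes> (inv a \<otimes> b) \<in> Gen" using aG unfolding Gen_def by (rule generate.eng[rotated])
      moreover have "a \<otimes> (inv a \<otimes> b) = b" using ac bc by (simp add: m_assoc[symmetric])
      ultimately show ?case unfolding b_def by simp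
    qed
    then have aG: "rep (act g x0) \<in> Gen" using p(2) by (metis order_refl)
    define a where "a = rep (act g x0)"
    have ac: "a \<in> carrier G" unfolding a_def using rep(1) by auto
    have d: "dist (act a x0) (act g x0) \<le> r" unfolding a_def using rep(2) .
    have "dist (act (inv a \<otimes> g) x0) x0 \<le> K * dist (act a x0) (act g x0) + 4 * A" by (rule L2[OF ac g])
    also have "\<dots> \<le> K * (2 * r + D) + 4 * A" using mult_left_mono[of "dist (act a x0) (act g x0)" "2 * r + D" K] d r0 D0 K1 by simp
    also have "\<dots> \<le> R0" unfolding R0_def using r0 by simp
    finally have "inv a \<otimes> g \<in> Gen" using inT ac g by simp
    then have "a \<otimes> (inv a \<otimes> g) \<in> Gen" using aG unfolding Gen_def a_def by (rule generate.eng[rotated])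
    moreover have "a \<otimes> (inv a \<otimes> g) = g" using ac g by (simp add: m_assoc[symmetric])
    ultimately show ?thesis by simp
  qed
  then have "Gen = carrier G" using Gsub by blast
  then have "rel_fin_gen G H F" unfolding rel_fin_gen_def Gen_def using F by blast
  then show ?thesis unfolding fin_gen_relative_def by blast
qed

end

context qa_ctx begin

lemma cancelL: "g \<in> carrier G \<Longrightarrow> y \<in> carrier G \<Longrightarrow> inv g \<otimes> (g \<otimes> y) = y"
  by (simp add: m_assoc[symmetric])
lemma cancelR: "g \<in> carrier G \<Longrightarrow> y \<in> carrier G \<Longrightarrow> g \<otimes> (inv g \<otimes> y) = y"
  by (simp add: m_assoc[symmetric])

lemma fin_cosets:
  assumes P: "subgroup P G" and T: "T \<subseteq> carrier G" and F: "finite F"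
    and cov: "\<forall>t\<in>T. \<exists>f\<in>F. \<phi> t \<in> f <# H"
    and sep: "\<forall>t\<in>T. \<forall>t'\<in>T. \<forall>f\<in>F. \<phi> t \<in> f <# H \<longrightarrow> \<phi> t' \<in> f <# H \<longrightarrow> inv t \<otimes> t' \<in> P"
  shows "finite {l_coset G t P | t. t \<in> T}"
proof -
  define ch where "ch f = (SOME t. t \<in> T \<and> \<phi> t \<in> f <# H)" for f
  have "{l_coset G t P | t. t \<in> T} \<subseteq> (\<lambda>f. ch f <# P) ` F"
  proof
    fix Y0 assume "Y0 \<in> {l_coset G t P | t. t \<in> T}"
    then obtain t where t: "t \<in> T" "Y0 = t <# P" by blast
    obtain f where f: "f \<in> F" "\<phi> t \<in> f <# H" using cov t(1) by blast
    have "\<exists>t. t \<in> T \<and> \<phi> t \<in> f <# H" using t(1) f(2) by blast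
    then have c: "ch f \<in> T" "\<phi> (ch f) \<in> f <# H" unfolding ch_def by (metis (mono_tags, lifting) someI_ex)+
    have u: "inv (ch f) \<otimes> t \<in> P" using sep c t(1) f by blast
    have cc: "ch f \<in> carrier G" "t \<in> carrier G" using c(1) t(1) T by auto
    have "ch f \<otimes> (inv (ch f) \<otimes> t) = t" using cancelR cc by blast
    then have "t \<in> ch f <# P" using u unfolding l_coset_def by (metis UN_iff singletonI)
    then have "ch f <# P = t <# P" using l_repr_independence[OF _ cc(1) P] by blast
    then have "Y0 = ch f <# P" using t(2) by simp
    then show "Y0 \<in> (\<lambda>f. ch f <# P) ` F" using f(1) by blast
  qed
  then show ?thesis using F finite_subset by blast
qed

lemma conj_subgroup:
  assumes g: "g \<in> carrier G"
  shows "subgroup ((\<lambda>h. g \<otimes> h \<otimes> inv g) ` H) G"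
proof (rule subgroupI)
  have Hc: "H \<subseteq> carrier G" using subgroup.subset[OF Hsub] .
  show "(\<lambda>h. g \<otimes> h \<otimes> inv g) ` H \<subseteq> carrier G" using Hc g by auto
  show "(\<lambda>h. g \<otimes> h \<otimes> inv g) ` H \<noteq> {}" using subgroup.one_closed[OF Hsub] by blast
  fix a assume "a \<in> (\<lambda>h. g \<otimes> h \<otimes> inv g) ` H"
  then obtain h where h: "h \<in> H" "a = g \<otimes> h \<otimes> inv g" by blast
  have hc: "h \<in> carrier G" using h(1) Hc by blast
  have ih: "inv h \<in> H" using subgroup.m_inv_closed[OF Hsub h(1)] .
  have "inv a = g \<otimes> inv h \<otimes> inv g" using h(2) hc g by (simp add: inv_mult_group m_assoc)
  then show "inv a \<in> (\<lambda>h. g \<otimes> h \<otimes> inv g) ` H" using ih by blast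
next
  have Hc: "H \<subseteq> carrier G" using subgroup.subset[OF Hsub] .
  fix a b assume "a \<in> (\<lambda>h. g \<otimes> h \<otimes> inv g) ` H" "b \<in> (\<lambda>h. g \<otimes> h \<otimes> inv g) ` H"
  then obtain h1 h2 where h: "h1 \<in> H" "a = g \<otimes> h1 \<otimes> inv g" "h2 \<in> H" "b = g \<otimes> h2 \<otimes> inv g" by blast
  have hc: "h1 \<in> carrier G" "h2 \<in> carrier G" using h Hc by auto
  have hh: "h1 \<otimes> h2 \<in> H" using subgroup.m_closed[OF Hsub h(1) h(3)] .
  have "a \<otimes> b = g \<otimes> (h1 \<otimes> h2) \<otimes> inv g" using h(2,4) hc g by (simp add: m_assoc cancelL)
  then show "a \<otimes> b \<in> (\<lambda>h. g \<otimes> h \<otimes> inv g) ` H" using hh by blast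
qed

lemma conj_bound:
  assumes a: "a \<in> carrier G" and k: "k \<in> H"
  shows "dist (act (a \<otimes> (k \<otimes> inv a)) x0) (act a x0) \<le>
           K * (K * dist (act (inv a) x0) x0 + 2 * A + BH) + 2 * A"
proof -
  have kc: "k \<in> carrier G" using k subgroup.subset[OF Hsub] by blast
  have ia: "inv a \<in> carrier G" using a by simp
  have 1: "dist (act (k \<otimes> inv a) x0) (act k x0) \<le> K * dist (act (inv a) x0) x0 + 2 * A"
    by (rule L1[OF kc ia])
  have "dist (act (k \<otimes> inv a) x0) x0 \<le> dist (act (k \<otimes> inv a) x0) (act k x0) + dist (act k x0) x0"
    by (rule dist_triangle)
  also have "\<dots> \<le> K * dist (act (inv a) x0) x0 + 2 * A + BH" using 1 Hbd[OF k] by linarith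
  finally have 2: "dist (act (k \<otimes> inv a) x0) x0 \<le> K * dist (act (inv a) x0) x0 + 2 * A + BH" .
  have "dist (act (a \<otimes> (k \<otimes> inv a)) x0) (act a x0) \<le> K * dist (act (k \<otimes> inv a) x0) x0 + 2 * A"
    using L1[OF a] kc ia by simp
  also have "\<dots> \<le> K * (K * dist (act (inv a) x0) x0 + 2 * A + BH) + 2 * A"
    using mult_left_mono[OF 2, of K] K1 by linarith
  finally show ?thesis .
qed

lemma part2: "commensurated G H"
  unfolding commensurated_def
proof (intro conjI Hsub ballI)
  fix g assume g: "g \<in> carrier G"
  define C where "C = (\<lambda>h. g \<otimes> h \<otimes> inv g) ` H"
  have Hc: "H \<subseteq> carrier G" using subgroup.subset[OF Hsub] .
  have Csub: "subgroup C G" unfolding C_def by (rule conj_subgroup[OF g])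
  have Cc: "C \<subseteq> carrier G" using subgroup.subset[OF Csub] .
  have P: "subgroup (C \<inter> H) G" by (rule subgroups_Inter_pair[OF Csub Hsub])
  have ig: "inv g \<in> carrier G" using g by simp
  have fi1: "finite_index_in G (C \<inter> H) H"
  proof -
    define M where "M = K * (K * dist (act (inv (inv g)) x0) x0 + 2 * A + BH) + 2 * A"
    obtain F where F: "finite F" "F \<subseteq> carrier G"
      "{t\<in>carrier G. dist (act t x0) (act (inv g) x0) \<le> M} \<subseteq> (\<Union>f\<in>F. f <# H)"
      using cover_R[of "act (inv g) x0" M] by blast
    define \<phi> where "\<phi> k = inv g \<otimes> k \<otimes> g" for k
    have \<phi>eq: "\<phi> k = inv g \<otimes> (k \<otimes> inv (inv g))" if "k \<in> H" for k
      unfolding \<phi>_def using that Hc g by (auto simp: m_assoc)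
    have cov: "\<forall>t\<in>H. \<exists>f\<in>F. \<phi> t \<in> f <# H"
    proof
      fix t assume t: "t \<in> H"
      have "dist (act (\<phi> t) x0) (act (inv g) x0) \<le> M"
        unfolding \<phi>eq[OF t] M_def by (rule conj_bound[OF ig t])
      moreover have "\<phi> t \<in> carrier G" unfolding \<phi>_def using t Hc g by auto
      ultimately show "\<exists>f\<in>F. \<phi> t \<in> f <# H" using F(3) by blast
    qed
    have sep: "\<forall>t\<in>H. \<forall>t'\<in>H. \<forall>f\<in>F. \<phi> t \<in> f <# H \<longrightarrow> \<phi> t' \<in> f <# H \<longrightarrow> inv t \<otimes> t' \<in> C \<inter> H"
    proof (intro ballI impI)
      fix t t' f assume t: "t \<in> H" "t' \<in> H" and f: "f \<in> F" and m: "\<phi> t \<in> f <# H" "\<phi> t' \<in> f <# H"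
      have fc: "f \<in> carrier G" using f F(2) by blast
      have tc: "t \<in> carrier G" "t' \<in> carrier G" using t Hc by auto
      obtain h1 where h1: "h1 \<in> H" "\<phi> t = f \<otimes> h1" using m(1) unfolding l_coset_def by blast
      obtain h2 where h2: "h2 \<in> H" "\<phi> t' = f \<otimes> h2" using m(2) unfolding l_coset_def by blast
      have hc: "h1 \<in> carrier G" "h2 \<in> carrier G" using h1 h2 Hc by auto
      have e1: "inv (\<phi> t) \<otimes> \<phi> t' = inv h1 \<otimes> h2"
        using h1(2) h2(2) fc hc by (simp add: inv_mult_group m_assoc cancelL)
      have e2: "inv (\<phi> t) \<otimes> \<phi> t' = inv g \<otimes> (inv t \<otimes> t') \<otimes> g"
        unfolding \<phi>_def using g tc by (simp add: inv_mult_group m_assoc cancelL cancelR)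
      have e3: "inv g \<otimes> (inv t \<otimes> t') \<otimes> g = inv h1 \<otimes> h2" using e1 e2 by simp
      have w: "g \<otimes> (inv g \<otimes> (inv t \<otimes> t') \<otimes> g) \<otimes> inv g = inv t \<otimes> t'"
        using g tc by (simp add: m_assoc cancelR)
      have "inv t \<otimes> t' = g \<otimes> (inv h1 \<otimes> h2) \<otimes> inv g" by (metis w e3)
      moreover have "inv h1 \<otimes> h2 \<in> H"
        using subgroup.m_closed[OF Hsub subgroup.m_inv_closed[OF Hsub h1(1)] h2(1)] .
      ultimately have "inv t \<otimes> t' \<in> C" unfolding C_def by blast
      moreover have "inv t \<otimes> t' \<in> H"
        using subgroup.m_closed[OF Hsub subgroup.m_inv_closed[OF Hsub t(1)] t(2)] .
      ultimately show "inv t \<otimes> t' \<in> C \<inter> H" by blast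
    qed
    show ?thesis unfolding finite_index_in_def
      using fin_cosets[OF P Hc F(1) cov sep] .
  qed
  have fi2: "finite_index_in G (C \<inter> H) C"
  proof -
    define M where "M = K * (K * dist (act (inv g) x0) x0 + 2 * A + BH) + 2 * A"
    obtain F where F: "finite F" "F \<subseteq> carrier G"
      "{t\<in>carrier G. dist (act t x0) (act g x0) \<le> M} \<subseteq> (\<Union>f\<in>F. f <# H)"
      using cover_R[of "act g x0" M] by blast
    have cov: "\<forall>t\<in>C. \<exists>f\<in>F. id t \<in> f <# H"
    proof
      fix t assume t: "t \<in> C"
      then obtain k where k: "k \<in> H" "t = g \<otimes> k \<otimes> inv g" unfolding C_def by blast
      have "t = g \<otimes> (k \<otimes> inv g)" using k g Hc by (auto simp: m_assoc)
      then have "dist (act t x0) (act g x0) \<le> M"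
        unfolding M_def using conj_bound[OF g k(1)] by simp
      then show "\<exists>f\<in>F. id t \<in> f <# H" using F(3) t Cc by auto
    qed
    have sep: "\<forall>t\<in>C. \<forall>t'\<in>C. \<forall>f\<in>F. id t \<in> f <# H \<longrightarrow> id t' \<in> f <# H \<longrightarrow> inv t \<otimes> t' \<in> C \<inter> H"
    proof (intro ballI impI)
      fix t t' f assume t: "t \<in> C" "t' \<in> C" and f: "f \<in> F" and m: "id t \<in> f <# H" "id t' \<in> f <# H"
      have fc: "f \<in> carrier G" using f F(2) by blast
      obtain h1 where h1: "h1 \<in> H" "t = f \<otimes> h1" using m(1) unfolding l_coset_def by auto
      obtain h2 where h2: "h2 \<in> H" "t' = f \<otimes> h2" using m(2) unfolding l_coset_def by auto
      have hc: "h1 \<in> carrier G" "h2 \<in> carrier G" using h1 h2 Hc by auto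
      have "inv t \<otimes> t' = inv h1 \<otimes> h2"
        using h1(2) h2(2) fc hc by (simp add: inv_mult_group m_assoc cancelL)
      moreover have "inv h1 \<otimes> h2 \<in> H"
        using subgroup.m_closed[OF Hsub subgroup.m_inv_closed[OF Hsub h1(1)] h2(1)] .
      moreover have "inv t \<otimes> t' \<in> C"
        using subgroup.m_closed[OF Csub subgroup.m_inv_closed[OF Csub t(1)] t(2)] .
      ultimately show "inv t \<otimes> t' \<in> C \<inter> H" by simp
    qed
    show ?thesis unfolding finite_index_in_def
      using fin_cosets[OF P Cc F(1) cov sep] .
  qed
  show "let C = (\<lambda>h. g \<otimes> h \<otimes> inv g) ` H in finite_index_in G (C \<inter> H) H \<and> finite_index_in G (C \<inter> H) C"
    using fi1 fi2 unfolding C_def Let_def by blast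
qed

end

context qa_S begin

lemma part3:
  assumes qg: "quasi_geodesic_space TYPE('c)"
  shows "\<exists>f.
              quasi_isometric_map dist UNIV (rel_word_dist G H S) (left_cosets G H) f \<and>
              (\<exists>C. \<forall>g\<in>carrier G. \<forall>x. rel_word_dist G H S (l_coset G g (f x)) (f (act g x)) \<le> C)"
proof -
  obtain D c1 c2 where D0: "D \<ge> 0" "c1 \<ge> 0" "c2 \<ge> 0" and
    ch: "\<forall>x y::'c. \<exists>p N. p 0 = x \<and> p N = y \<and> real N \<le> c1 * dist x y + c2 \<and>
                (\<forall>i<N. dist (p i) (p (Suc i)) \<le> D)"
    using chain_lemma[OF qg] by blast
  obtain N1 where N1: "\<forall>a\<in>carrier G. \<forall>b\<in>carrier G. dist (act a x0) (act b x0) \<le> 2 * r + D \<longrightarrow>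
   (\<exists>n\<le>N1. (a <# H, b <# H) \<in> E ^^ n)" using W1[of "2 * r + D"] by blast
  obtain N2 where N2: "\<forall>a\<in>carrier G. \<forall>b\<in>carrier G. dist (act a x0) (act b x0) \<le> r \<longrightarrow>
   (\<exists>n\<le>N2. (a <# H, b <# H) \<in> E ^^ n)" using W1[of r] by blast
  obtain N3 where N3: "\<forall>a\<in>carrier G. \<forall>b\<in>carrier G. dist (act a x0) (act b x0) \<le> K * r + 2 * A + r \<longrightarrow>
   (\<exists>n\<le>N3. (a <# H, b <# H) \<in> E ^^ n)" using W1[of "K * r + 2 * A + r"] by blast
  define f where "f x = rep x <# H" for x
  define K' where "K' = max 1 (max DE (real N1 * c1))"
  define A' where "A' = max (real N1 * c2) (max (2 * r + DE) (real N2))"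
  have K'1: "K' \<ge> 1" "K' \<ge> DE" "K' \<ge> real N1 * c1" unfolding K'_def by auto
  have A'0: "A' \<ge> real N1 * c2" "A' \<ge> 2 * r + DE" "A' \<ge> real N2" unfolding A'_def by auto
  have A'pos: "A' \<ge> 0" using A'0(3) by linarith
  have Hc: "H \<subseteq> carrier G" using subgroup.subset[OF Hsub] .
  have upper: "rel_word_dist G H S (f x) (f y) \<le> K' * dist x y + A'" for x y
  proof -
    obtain p N where p: "p 0 = x" "p N = y" "real N \<le> c1 * dist x y + c2"
      "\<forall>i<N. dist (p i) (p (Suc i)) \<le> D" using ch by blast
    have "i \<le> N \<Longrightarrow> \<exists>m\<le>N1 * i. (f (p 0), f (p i)) \<in> E ^^ m" for i
    proof (induction i)
      case 0
      then show ?case by (intro exI[of _ 0]) auto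
    next
      case (Suc i)
      then obtain m where m: "m \<le> N1 * i" "(f (p 0), f (p i)) \<in> E ^^ m" by auto
      have "dist (act (rep (p i)) x0) (act (rep (p (Suc i))) x0) \<le>
          dist (act (rep (p i)) x0) (p i) + dist (p i) (p (Suc i)) + dist (p (Suc i)) (act (rep (p (Suc i))) x0)"
        using dist_triangle[of "act (rep (p i)) x0" "act (rep (p (Suc i))) x0" "p i"]
          dist_triangle[of "p i" "act (rep (p (Suc i))) x0" "p (Suc i)"] by linarith
      also have "\<dots> \<le> 2 * r + D"
      proof -
        have "dist (p i) (p (Suc i)) \<le> D" using p(4) Suc.prems by simp
        then show ?thesis using rep(2)[of "p i"] rep(2)[of "p (Suc i)"] by (simp add: dist_commute)
      qed
      finally obtain n where n: "n \<le> N1" "(f (p i), f (p (Suc i))) \<in> E ^^ n"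
        using N1 rep(1) unfolding f_def by blast
      have "(f (p 0), f (p (Suc i))) \<in> E ^^ (m + n)" using m(2) n(2) by (auto simp: relpow_add)
      moreover have "m + n \<le> N1 * Suc i" using m(1) n(1) by simp
      ultimately show ?case by blast
    qed
    then obtain m where m: "m \<le> N1 * N" "(f x, f y) \<in> E ^^ m" using p(1,2) by blast
    have "rel_word_dist G H S (f x) (f y) \<le> real m" by (rule dw_le[OF m(2)])
    also have "\<dots> \<le> real N1 * real N" using m(1) by (metis of_nat_le_iff of_nat_mult)
    also have "\<dots> \<le> real N1 * (c1 * dist x y + c2)" using p(3) by (simp add: mult_left_mono)
    also have "\<dots> = (real N1 * c1) * dist x y + real N1 * c2" by (simp add: algebra_simps)
    also have "\<dots> \<le> K' * dist x y + A'" using K'1(3) A'0(1)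
      by (intro add_mono mult_right_mono) auto
    finally show ?thesis .
  qed
  have lower: "dist x y / K' - A' \<le> rel_word_dist G H S (f x) (f y)" for x y
  proof -
    obtain n where n: "rel_word_dist G H S (f x) (f y) = real n" "(f x, f y) \<in> E ^^ n"
      using dw_path[OF rep(1) rep(1)] unfolding f_def by blast
    have inx: "rep x \<in> f x" "rep y \<in> f y" unfolding f_def using lcos_self[OF rep(1) Hsub] by auto
    have "dist (act (rep x) x0) (act (rep y) x0) \<le> DE * (real n + 1)"
      by (rule path_close[OF n(2) rep(1) f_def inx])
    then have "dist x y \<le> r + DE * (real n + 1) + r"
      using rep(2)[of x] rep(2)[of y] dist_triangle[of x y "act (rep x) x0"]
        dist_triangle[of "act (rep x) x0" y "act (rep y) x0"] by (simp add: dist_commute)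
    also have "\<dots> = DE * real n + (2 * r + DE)" by (simp add: algebra_simps)
    also have "\<dots> \<le> K' * real n + K' * A'"
    proof (rule add_mono)
      show "DE * real n \<le> K' * real n" using K'1(2) by (simp add: mult_right_mono)
      have "A' \<le> K' * A'" using K'1(1) A'pos by (simp add: mult_le_cancel_right1)
      then show "2 * r + DE \<le> K' * A'" using A'0(2) by linarith
    qed
    finally have "dist x y \<le> K' * (real n + A')" by (simp add: algebra_simps)
    then have "dist x y / K' \<le> real n + A'" using K'1(1) by (simp add: divide_le_eq mult.commute)
    then show ?thesis using n(1) by linarith
  qed
  have surj: "\<exists>x\<in>UNIV. rel_word_dist G H S (f x) z \<le> A'" if z: "z \<in> left_cosets G H" for z
  proof -
    obtain g where g: "g \<in> carrier G" "z = g <# H" using z unfolding left_cosets_def by blast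
    have "dist (act (rep (act g x0)) x0) (act g x0) \<le> r" by (rule rep(2))
    then obtain n where n: "n \<le> N2" "(f (act g x0), z) \<in> E ^^ n"
      using N2 rep(1) g unfolding f_def by blast
    have "rel_word_dist G H S (f (act g x0)) z \<le> real N2"
      using dw_le[OF n(2)] n(1) by linarith
    then have "rel_word_dist G H S (f (act g x0)) z \<le> A'" using A'0(3) by linarith
    then show ?thesis by (intro bexI[of _ "act g x0"]) auto
  qed
  have img: "f ` UNIV \<subseteq> left_cosets G H" unfolding f_def left_cosets_def using rep(1) by blast
  have qi: "quasi_isometric_map dist UNIV (rel_word_dist G H S) (left_cosets G H) f"
  proof -
    have "quasi_isometry_on K' A' dist UNIV (rel_word_dist G H S) (left_cosets G H) f"
      unfolding quasi_isometry_on_def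
    proof (intro conjI ballI)
      show "f ` UNIV \<subseteq> left_cosets G H" by (rule img)
      show "dist x y / K' - A' \<le> rel_word_dist G H S (f x) (f y)" for x y by (rule lower)
      show "rel_word_dist G H S (f x) (f y) \<le> K' * dist x y + A'" for x y by (rule upper)
      show "\<exists>x\<in>UNIV. rel_word_dist G H S (f x) z \<le> A'" if "z \<in> left_cosets G H" for z
        by (rule surj[OF that])
    qed
    then show ?thesis unfolding quasi_isometric_map_def using K'1(1) A'pos by blast
  qed
  have equiv: "rel_word_dist G H S (l_coset G g (f x)) (f (act g x)) \<le> real N3"
    if g: "g \<in> carrier G" for g x
  proof -
    have e: "l_coset G g (f x) = (g \<otimes> rep x) <# H" unfolding f_def
      by (rule lcos_m_assoc[OF Hc g rep(1)])
    have gr: "g \<otimes> rep x \<in> carrier G" using g rep(1) by simp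
    have "dist (act (g \<otimes> rep x) x0) (act g x) \<le> K * dist (act (rep x) x0) x + 2 * A"
      by (rule L1[OF g rep(1)])
    also have "\<dots> \<le> K * r + 2 * A" using mult_left_mono[OF rep(2)[of x], of K] K1 by linarith
    finally have 1: "dist (act (g \<otimes> rep x) x0) (act g x) \<le> K * r + 2 * A" .
    have "dist (act (g \<otimes> rep x) x0) (act (rep (act g x)) x0) \<le>
        dist (act (g \<otimes> rep x) x0) (act g x) + dist (act (rep (act g x)) x0) (act g x)"
      by (rule dist_triangle2)
    also have "\<dots> \<le> K * r + 2 * A + r" using 1 rep(2)[of "act g x"] by linarith
    finally obtain n where n: "n \<le> N3" "((g \<otimes> rep x) <# H, f (act g x)) \<in> E ^^ n"
      using N3 gr rep(1) unfolding f_def by blast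
    show ?thesis unfolding e using dw_le[OF n(2)] n(1) by linarith
  qed
  show ?thesis using qi equiv by blast
qed

end

theorem propositionE:
  fixes G :: "('g, 'm) monoid_scheme"
    and act :: "'g \<Rightarrow> 'x::metric_space \<Rightarrow> 'x"
    and x0 :: 'x
    and H :: "'g set"
  assumes "group G"
    and "quasi_geodesic_space TYPE('x)"
    and "is_quasi_action G act"
    and "cobounded_qa G act"
    and "coarse_stabiliser G act x0 H"
  shows "fin_gen_relative G H \<and> commensurated G H \<and>
         (\<forall>S. rel_fin_gen G H S \<longrightarrow>
           (\<exists>f :: 'x \<Rightarrow> 'g set.
              quasi_isometric_map dist UNIV (rel_word_dist G H S) (left_cosets G H) f \<and>
              (\<exists>C. \<forall>g\<in>carrier G. \<forall>x. rel_word_dist G H S (l_coset G g (f x)) (f (act g x)) \<le> C)))"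
proof -
  obtain K A where qa: "quasi_action G K A act" using assms(3) unfolding is_quasi_action_def by blast
  have qi: "\<forall>g\<in>carrier G. quasi_isometry_on K A dist UNIV dist UNIV (act g)"
    and comp: "\<forall>g\<in>carrier G. \<forall>h\<in>carrier G. \<forall>x. dist (act h (act g x)) (act (h \<otimes>\<^bsub>G\<^esub> g) x) \<le> A"
    and ident: "\<forall>x. dist (act \<one>\<^bsub>G\<^esub> x) x \<le> A"
    using qa unfolding quasi_action_def by blast+
  have A0: "A \<ge> 0" using ident zero_le_dist order.trans by blast
  have up: "dist (act g x) (act g y) \<le> max K 1 * dist x y + A" if "g \<in> carrier G" for g x y
  proof -
    have "dist (act g x) (act g y) \<le> K * dist x y + A"
      using qi that unfolding quasi_isometry_on_def by blast
    moreover have "K * dist x y \<le> max K 1 * dist x y" by (rule mult_right_mono) auto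
    ultimately show ?thesis by linarith
  qed
  obtain r where cob: "\<forall>x y. \<exists>g\<in>carrier G. dist (act g x) y \<le> r"
    using assms(4) unfolding cobounded_qa_def by blast
  have Hsub: "subgroup H G" and Hb: "bounded ((\<lambda>t. act t x0) ` H)"
    and cover: "\<forall>T. T \<subseteq> carrier G \<longrightarrow> qa_bounded act x0 T \<longrightarrow>
        (\<exists>F. finite F \<and> F \<subseteq> carrier G \<and> T \<subseteq> (\<Union>g\<in>F. l_coset G g H))"
    using assms(5) unfolding coarse_stabiliser_def qa_bounded_def by blast+
  obtain BH where BH: "\<forall>y\<in>(\<lambda>t. act t x0) ` H. dist x0 y \<le> BH"
    using Hb bounded_any_center by blast
  have Hbd: "dist (act h x0) x0 \<le> BH" if "h \<in> H" for h
    using BH that by (simp add: dist_commute)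
  have ctx: "qa_ctx G act (max K 1) A BH r x0 H"
    unfolding qa_ctx_def qa_ctx_axioms_def
  proof (intro conjI allI impI)
    show "group G" by (rule assms(1))
  qed (use A0 up comp ident cob Hsub Hbd cover in \<open>auto simp: qa_bounded_def\<close>)
  have p1: "fin_gen_relative G H" by (rule qa_ctx.part1[OF ctx assms(2)])
  have p2: "commensurated G H" by (rule qa_ctx.part2[OF ctx])
  have p3: "\<exists>f :: 'x \<Rightarrow> 'g set.
              quasi_isometric_map dist UNIV (rel_word_dist G H S) (left_cosets G H) f \<and>
              (\<exists>C. \<forall>g\<in>carrier G. \<forall>x. rel_word_dist G H S (l_coset G g (f x)) (f (act g x)) \<le> C)"
    if S: "rel_fin_gen G H S" for S
  proof -
    have "qa_S G act (max K 1) A BH r x0 H S"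
      unfolding qa_S_def qa_S_axioms_def using ctx S unfolding rel_fin_gen_def by blast
    then show ?thesis by (rule qa_S.part3[OF _ assms(2)])
  qed
  show ?thesis using p1 p2 p3 by blast
qed

end
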